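(* Let $\gamma_{\mathrm f} > 1$. Then the inequality \[ \prod_{i=1,2} \frac{1}{N_i} \frac{|\sin(N_i \bar{z}_i / 2)|}{|\sin(\bar{z}_i / 2)|} \geq \frac{1}{\sqrt{\gamma_{\mathrm f}}} \] holds whenever $\bar{z}_i\in\left[-\frac{2}{N_i} \alpha^{*}, \frac{2}{N_i} \alpha^{*}\right]$ for both $i = 1,2$. Here, $\alpha^{*}$ is the unique root of the equation \[ \frac{\sin(\alpha)}{\alpha} = \frac{1}{\sqrt[4]{\gamma_{\mathrm f}}} \] within the range $[0, \pi]$.
   Context: Consider an $N_1 \times N_2$ uniform rectangular antenna array (URA) with horizontal and vertical inter-element spacings $d_1, d_2$ and wavelength $\lambda$. A steering vector is aimed at direction $(\theta_x,\theta_y)$ (angles measured relative to the x- and y-axes), while the incident ray arrives from $(\theta_x+\Delta_x,\theta_y+\Delta_y)$. The resulting phase deviations are $\bar{z}_1 = \frac{2\pi}{\lambda}d_1[\sin(\theta_x+\Delta_x) - \sin(\theta_x)]$ and $\bar{z}_2 = \frac{2\pi}{\lambda}d_2[\sin(\theta_y+\Delta_y) - \sin(\theta_y)]$, and the ratio of achievable to maximum array gain is $\left(\prod_{i=1}^2\frac{1}{N_i}\frac{\sin(N_i\bar{z}_i/2)}{\sin(\bar{z}_i/2)}\right)^2$. The degradation factor threshold is $\gamma_{\mathrm f} = 10^{\gamma/10}$, where $\gamma$ is the allowed gain loss in dB; the gain loss stays within $\gamma$ dB iff this ratio is at least $1/\gamma_{\mathrm f}$, i.e. iff the product in the claim is at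 least $1/\sqrt{\gamma_{\mathrm f}}$. $N_1,N_2$ are positive integers. *)

theory Defs
  imports Complex_Main
begin

text \<open>Normalized array factor (1/N) |sin(N z/2)| / |sin(z/2)|, extended by its
  limit value 1 at the removable singularities where sin(z/2) = 0.\<close>
definition norm_af :: "nat \<Rightarrow> real \<Rightarrow> real" where
  "norm_af N z = (if sin (z / 2) = 0 then 1
                  else (1 / real N) * (\<bar>sin (real N * z / 2)\<bar> / \<bar>sin (z / 2)\<bar>))"

end

theory Submission
  imports Defs
begin

lemma aux_f:
  fixes u :: real
  assumes "0 \<le> u" "u \<le> pi"
  shows "u * cos u - sin u \<le> 0"
proof -
  have "(\<lambda>x. x * cos x - sin x) u \<le> (\<lambda>x. x * cos x - sin x) 0"
  proof (rule deriv_nonpos_imp_antimono[of 0 u _ "\<lambda>x. 1 * cos x + x * (- sin x) - cos x"])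
    fix x assume "x \<in> {0..u}"
    then have x: "0 \<le> x" "x \<le> u" by auto
    show "((\<lambda>x. x * cos x - sin x) has_real_derivative (1 * cos x + x * (- sin x) - cos x)) (at x)"
      by (auto intro!: derivative_eq_intros)
    show "1 * cos x + x * (- sin x) - cos x \<le> 0"
      using x assms sin_ge_zero[of x] by simp
  qed (use assms in auto)
  then show ?thesis by simp
qed

lemma sinc_mono:
  fixes s t :: real
  assumes "0 < s" "s \<le> t" "t \<le> pi"
  shows "sin t / t \<le> sin s / s"
proof (rule deriv_nonpos_imp_antimono[of s t "\<lambda>x. sin x / x" "\<lambda>x. (cos x * x - sin x * 1) / (x * x)"])
  fix x assume "x \<in> {s..t}"
  then have x: "s \<le> x" "x \<le> t" by auto
  then have xp: "x > 0" using assms by auto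
  show "((\<lambda>x. sin x / x) has_real_derivative ((cos x * x - sin x * 1) / (x * x))) (at x)"
    using xp by (auto intro!: derivative_eq_intros)
  show "(cos x * x - sin x * 1) / (x * x) \<le> 0"
    using aux_f[of x] x assms xp by (intro divide_nonpos_pos) (auto simp: mult.commute)
qed (use assms in auto)

lemma af_bound:
  fixes N :: nat and z \<alpha> :: real
  assumes "N > 0" "0 < \<alpha>" "\<alpha> \<le> pi" "\<bar>z\<bar> \<le> 2 / real N * \<alpha>"
  shows "norm_af N z \<ge> sin \<alpha> / \<alpha>"
proof (cases "sin (z / 2) = 0")
  case True
  have "sin \<alpha> \<le> \<alpha>" using sin_x_le_x assms by auto
  then have "sin \<alpha> / \<alpha> \<le> 1" using assms by simp
  then show ?thesis using True by (simp add: norm_af_def)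
next
  case False
  define x where "x = z / 2"
  have x0: "x \<noteq> 0" using False x_def by auto
  define t where "t = real N * \<bar>x\<bar>"
  have Np: "real N > 0" using assms by simp
  have tp: "t > 0" using x0 Np t_def by simp
  have "\<bar>z\<bar> * real N \<le> 2 * \<alpha>" using assms(4) Np by (simp add: field_simps)
  then have ta: "t \<le> \<alpha>" unfolding t_def x_def by (simp add: abs_divide field_simps)
  have st: "\<bar>sin (real N * x)\<bar> = sin t"
  proof -
    have "sin t \<ge> 0" using tp ta assms by (intro sin_ge_zero) auto
    moreover have "\<bar>sin (real N * x)\<bar> = \<bar>sin t\<bar>"
      unfolding t_def by (cases "x \<ge> 0") auto
    ultimately show ?thesis by simp
  qed
  have sx: "\<bar>sin x\<bar> \<le> \<bar>x\<bar>" by (rule abs_sin_x_le_abs_x)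
  have sxp: "\<bar>sin x\<bar> > 0" using False unfolding x_def by simp
  have "sin \<alpha> / \<alpha> \<le> sin t / t" using sinc_mono[of t \<alpha>] tp ta assms by simp
  also have "sin t / t = sin t / (real N * \<bar>x\<bar>)" by (simp add: t_def)
  also have "\<dots> \<le> sin t / (real N * \<bar>sin x\<bar>)"
    using sx sxp Np st tp ta assms sin_ge_zero[of t]
    by (intro divide_left_mono mult_left_mono mult_pos_pos) auto
  also have "\<dots> = norm_af N z"
    using False st unfolding norm_af_def x_def by (simp add: field_simps)
  finally show ?thesis .
qed

theorem lemma2:
  fixes N1 N2 :: nat and z1 z2 \<gamma>f \<alpha> :: real
  assumes "\<gamma>f > 1"
    and "N1 > 0" and "N2 > 0"
    and "0 \<le> \<alpha>" and "\<alpha> \<le> pi"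
    and "sin \<alpha> / \<alpha> = 1 / root 4 \<gamma>f"
    and "\<bar>z1\<bar> \<le> 2 / real N1 * \<alpha>"
    and "\<bar>z2\<bar> \<le> 2 / real N2 * \<alpha>"
  shows "norm_af N1 z1 * norm_af N2 z2 \<ge> 1 / sqrt \<gamma>f"
proof -
  define c where "c = 1 / root 4 \<gamma>f"
  have cp: "c > 0" using assms(1) by (simp add: c_def)
  have ap: "\<alpha> > 0"
  proof (rule ccontr)
    assume "\<not> \<alpha> > 0" then have "\<alpha> = 0" using assms by simp
    then show False using assms(6) cp c_def by simp
  qed
  have h1: "norm_af N1 z1 \<ge> c" using af_bound[of N1 \<alpha> z1] assms ap c_def by simp
  have h2: "norm_af N2 z2 \<ge> c" using af_bound[of N2 \<alpha> z2] assms ap c_def by simp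
  have "root 4 \<gamma>f = root 2 (root 2 \<gamma>f)"
    using real_root_mult_exp[of 2 2 \<gamma>f] by simp
  then have r: "root 4 \<gamma>f * root 4 \<gamma>f = sqrt \<gamma>f"
    using assms(1) by (simp add: sqrt_def[symmetric])
  have "c * c = 1 / sqrt \<gamma>f" unfolding c_def using r by (simp add: field_simps)
  moreover have "c * c \<le> norm_af N1 z1 * norm_af N2 z2"
    using h1 h2 cp by (intro mult_mono) auto
  ultimately show ?thesis by simp
qed

end
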